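(* Let $\rho,\sigma,\gamma$ be qubit density matrices written in the energy eigenbasis as $\rho=\begin{pmatrix} r & a \\ \bar{a} & 1-r\end{pmatrix}$, $\sigma=\begin{pmatrix} s & b \\ \bar{b} & 1-s\end{pmatrix}$, $\gamma=\begin{pmatrix} g & 0 \\ 0 & 1-g\end{pmatrix}$, with diagonal vectors $\mathbf{r}=(r,1-r)^T$, $\mathbf{s}=(s,1-s)^T$, $\mathbf{g}=(g,1-g)^T$, and suppose $a\neq 0$ and $g\neq\frac12$. Then, for $\mathbf{r}\neq \mathbf{g}$, $(\rho,\gamma)\xrightarrow{{\rm GPC}}(\sigma,\gamma)$ if and only if $(\mathbf{r},\mathbf{g})\succ (\mathbf{s},\mathbf{g})$ and \[ \frac{|b|^2}{|a|^2}\leq\frac{\det\begin{pmatrix} s & 1-r \\ g & 1-g\end{pmatrix}\det\begin{pmatrix} r & 1-s \\ g & 1-g\end{pmatrix}}{\left(r-g\right)^2}. \] For $\mathbf{r}=\mathbf{g}$, $(\rho,\gamma)\xrightarrow{{\rm GPC}}(\sigma,\gamma)$ if and only if $\mathbf{s}=\mathbf{g}$ and $|a|\geq |b|$.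
   Context: Setting: a qubit system $A$ with a well-defined (non-degenerate) Hamiltonian $H^A$ and inverse temperature $\beta$; $\gamma=e^{-\beta H^A}/{\rm Tr}[e^{-\beta H^A}]$ is the Gibbs state, diagonal in the energy eigenbasis $\{|0\rangle,|1\rangle\}$. An athermality state is a pair $(\rho,\gamma)$. ${\rm GPC}$ denotes the set of Gibbs-preserving covariant channels: quantum channels $\mathcal{E}$ with $\mathcal{E}(\gamma)=\gamma$ that are time-translation covariant, i.e. $\mathcal{E}(e^{-iH^At}\rho e^{iH^At})=e^{-iH^At}\mathcal{E}(\rho)e^{iH^At}$ for all $t\in\mathbb{R}$. The notation $(\rho,\gamma)\xrightarrow{{\rm GPC}}(\sigma,\gamma)$ means there exists $\mathcal{E}\in{\rm GPC}$ with $\mathcal{E}(\rho)=\sigma$. Relative majorization $(\mathbf{r},\mathbf{g})\succ(\mathbf{s},\mathbf{g})$ means there exists a column stochastic matrix $E$ with $E\mathbf{r}=\mathbf{s}$ and $E\mathbf{g}=\mathbf{g}$. (The cases $a=0$ or $g=\frac12$ reduce to the quasi-classical regime and are excluded.) *)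

theory Defs
  imports "HOL-Analysis.Analysis" "Jordan_Normal_Form.Matrix" "Jordan_Normal_Form.Determinant"
begin

type_synonym cmat = "complex mat"

definition mtrace :: "cmat \<Rightarrow> complex" where
  "mtrace M = (\<Sum>i<dim_row M. M $$ (i, i))"

definition madj :: "cmat \<Rightarrow> cmat" where
  "madj M = mat (dim_col M) (dim_row M) (\<lambda>(i, j). cnj (M $$ (j, i)))"

definition psd :: "nat \<Rightarrow> cmat \<Rightarrow> bool" where
  "psd n M \<longleftrightarrow> M \<in> carrier_mat n n \<and>
     (\<forall>v \<in> carrier_vec n.
        let q = (\<Sum>i<n. \<Sum>j<n. cnj (v $ i) * M $$ (i, j) * v $ j) in Im q = 0 \<and> Re q \<ge> 0)"

definition density :: "cmat \<Rightarrow> bool" where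
  "density M \<longleftrightarrow> psd 2 M \<and> mtrace M = 1"

definition linear_map2 :: "(cmat \<Rightarrow> cmat) \<Rightarrow> bool" where
  "linear_map2 E \<longleftrightarrow>
     (\<forall>X \<in> carrier_mat 2 2. E X \<in> carrier_mat 2 2) \<and>
     (\<forall>X \<in> carrier_mat 2 2. \<forall>Y \<in> carrier_mat 2 2. \<forall>c d :: complex.
         E (c \<cdot>\<^sub>m X + d \<cdot>\<^sub>m Y) = c \<cdot>\<^sub>m E X + d \<cdot>\<^sub>m E Y)"

text \<open>The 2x2 block (p,q) of a (2k)x(2k) matrix, and the action of E \<otimes> id_k
  (system index fast, ancilla index = block index).\<close>
definition blk :: "cmat \<Rightarrow> nat \<Rightarrow> nat \<Rightarrow> cmat" where
  "blk M p q = mat 2 2 (\<lambda>(\<alpha>, \<beta>). M $$ (2 * p + \<alpha>, 2 * q + \<beta>))"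

definition ext_map :: "(cmat \<Rightarrow> cmat) \<Rightarrow> nat \<Rightarrow> cmat \<Rightarrow> cmat" where
  "ext_map E k M = mat (2 * k) (2 * k)
     (\<lambda>(i, j). E (blk M (i div 2) (j div 2)) $$ (i mod 2, j mod 2))"

definition completely_positive :: "(cmat \<Rightarrow> cmat) \<Rightarrow> bool" where
  "completely_positive E \<longleftrightarrow>
     (\<forall>k::nat. \<forall>M. psd (2 * k) M \<longrightarrow> psd (2 * k) (ext_map E k M))"

definition trace_preserving :: "(cmat \<Rightarrow> cmat) \<Rightarrow> bool" where
  "trace_preserving E \<longleftrightarrow> (\<forall>X \<in> carrier_mat 2 2. mtrace (E X) = mtrace X)"

definition quantum_channel :: "(cmat \<Rightarrow> cmat) \<Rightarrow> bool" where
  "quantum_channel E \<longleftrightarrow> linear_map2 E \<and> completely_positive E \<and> trace_preserving E"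

text \<open>Hamiltonian H = diag(E0,E1) in its energy eigenbasis; U_t = exp(-i H t).\<close>
definition evol :: "real \<Rightarrow> real \<Rightarrow> real \<Rightarrow> cmat" where
  "evol E0 E1 t = mat_of_rows_list 2
     [[exp (- \<i> * of_real (E0 * t)), 0], [0, exp (- \<i> * of_real (E1 * t))]]"

definition gibbs_weight :: "real \<Rightarrow> real \<Rightarrow> real \<Rightarrow> real" where
  "gibbs_weight \<beta> E0 E1 = exp (- \<beta> * E0) / (exp (- \<beta> * E0) + exp (- \<beta> * E1))"

definition gibbs :: "real \<Rightarrow> real \<Rightarrow> real \<Rightarrow> cmat" where
  "gibbs \<beta> E0 E1 = mat_of_rows_list 2
     [[of_real (gibbs_weight \<beta> E0 E1), 0], [0, of_real (1 - gibbs_weight \<beta> E0 E1)]]"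

definition covariant :: "real \<Rightarrow> real \<Rightarrow> (cmat \<Rightarrow> cmat) \<Rightarrow> bool" where
  "covariant E0 E1 E \<longleftrightarrow> (\<forall>t::real. \<forall>X \<in> carrier_mat 2 2.
      E (evol E0 E1 t * X * madj (evol E0 E1 t)) = evol E0 E1 t * E X * madj (evol E0 E1 t))"

definition GPC :: "real \<Rightarrow> real \<Rightarrow> real \<Rightarrow> (cmat \<Rightarrow> cmat) set" where
  "GPC \<beta> E0 E1 = {E. quantum_channel E \<and> E (gibbs \<beta> E0 E1) = gibbs \<beta> E0 E1 \<and> covariant E0 E1 E}"

definition GPC_convertible :: "real \<Rightarrow> real \<Rightarrow> real \<Rightarrow> cmat \<Rightarrow> cmat \<Rightarrow> bool" where
  "GPC_convertible \<beta> E0 E1 \<rho> \<sigma> \<longleftrightarrow> (\<exists>E \<in> GPC \<beta> E0 E1. E \<rho> = \<sigma>)"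

definition rel_majorizes :: "nat \<Rightarrow> real vec \<Rightarrow> real vec \<Rightarrow> real vec \<Rightarrow> real vec \<Rightarrow> bool" where
  "rel_majorizes n r g s g' \<longleftrightarrow> (\<exists>E \<in> carrier_mat n n.
      (\<forall>i<n. \<forall>j<n. E $$ (i, j) \<ge> 0) \<and> (\<forall>j<n. (\<Sum>i<n. E $$ (i, j)) = 1) \<and>
      E *\<^sub>v r = s \<and> E *\<^sub>v g = g')"

definition qubit :: "real \<Rightarrow> complex \<Rightarrow> cmat" where
  "qubit r a = mat_of_rows_list 2 [[of_real r, a], [cnj a, of_real (1 - r)]]"

definition diagv :: "real \<Rightarrow> real vec" where
  "diagv r = vec_of_list [r, 1 - r]"

end

theory Submission
  imports Defs
begin

declare One_nat_def [simp del]

lemma less2: "(i::nat) < 2 \<Longrightarrow> i = 0 \<or> i = 1" by auto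

lemma det1: "det (mat (Suc 0) (Suc 0) f) = (f (0,0) :: 'a::comm_ring_1)"
  by (subst det_upper_triangular[where n=1]) (auto simp: upper_triangular_def diag_mat_def)
lemma det2: "det (mat_of_rows_list 2 [[x,y],[z,w::real]]) = x*w - y*z"
  apply (subst laplace_expansion_column[where j=0 and n=2])
  apply (auto simp: mat_of_rows_list_def cofactor_def mat_delete_def det1 numeral_2_eq_2)
  done

lemma mat2_eqI:
  assumes "A \<in> carrier_mat 2 2" "B \<in> carrier_mat 2 2"
   "A $$ (0,0) = B $$ (0,0)" "A $$ (0,1) = B $$ (0,1)" "A $$ (1,0) = B $$ (1,0)" "A $$ (1,1) = B $$ (1,1)"
  shows "A = B"
  apply (rule eq_matI) using assms by (auto dest!: less2)

definition unit2 :: "nat \<Rightarrow> nat \<Rightarrow> cmat" where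
  "unit2 i j = mat 2 2 (\<lambda>(k,l). if k = i \<and> l = j then 1 else 0)"

lemma unit2_carrier[simp]: "unit2 i j \<in> carrier_mat 2 2" by (simp add: unit2_def)

lemma lin_carrier: "linear_map2 E \<Longrightarrow> X \<in> carrier_mat 2 2 \<Longrightarrow> E X \<in> carrier_mat 2 2"
  by (simp add: linear_map2_def)

lemma lin_add: assumes "linear_map2 E" "X \<in> carrier_mat 2 2" "Y \<in> carrier_mat 2 2"
  shows "E (X + Y) = E X + E Y"
proof -
  have "E (1 \<cdot>\<^sub>m X + 1 \<cdot>\<^sub>m Y) = 1 \<cdot>\<^sub>m E X + 1 \<cdot>\<^sub>m E Y"
    using assms unfolding linear_map2_def by blast
  moreover have "\<And>Z::cmat. 1 \<cdot>\<^sub>m Z = Z" by (rule eq_matI) auto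
  ultimately show ?thesis by simp
qed

lemma lin_smult: assumes "linear_map2 E" "X \<in> carrier_mat 2 2"
  shows "E (c \<cdot>\<^sub>m X) = c \<cdot>\<^sub>m E X"
proof -
  have z: "(0\<^sub>m 2 2 :: cmat) \<in> carrier_mat 2 2" by simp
  have "E (c \<cdot>\<^sub>m X + 0 \<cdot>\<^sub>m 0\<^sub>m 2 2) = c \<cdot>\<^sub>m E X + 0 \<cdot>\<^sub>m E (0\<^sub>m 2 2)"
    using assms z unfolding linear_map2_def by blast
  moreover have "c \<cdot>\<^sub>m X + 0 \<cdot>\<^sub>m 0\<^sub>m 2 2 = c \<cdot>\<^sub>m X" using assms(2) by (intro eq_matI) auto
  moreover have "c \<cdot>\<^sub>m E X + 0 \<cdot>\<^sub>m E (0\<^sub>m 2 2) = c \<cdot>\<^sub>m E X"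
    using lin_carrier[OF assms(1) z] lin_carrier[OF assms] by (intro eq_matI) auto
  ultimately show ?thesis by simp
qed

lemma lin_decomp:
  assumes E: "linear_map2 E" and X: "X \<in> carrier_mat 2 2" and k: "k < 2" and l: "l < 2"
  shows "E X $$ (k,l) = X $$ (0,0) * E (unit2 0 0) $$ (k,l) + X $$ (1,1) * E (unit2 1 1) $$ (k,l)
     + X $$ (0,1) * E (unit2 0 1) $$ (k,l) + X $$ (1,0) * E (unit2 1 0) $$ (k,l)"
proof -
  let ?A = "X $$ (0,0) \<cdot>\<^sub>m unit2 0 0" and ?B = "X $$ (1,1) \<cdot>\<^sub>m unit2 1 1"
  let ?C = "X $$ (0,1) \<cdot>\<^sub>m unit2 0 1" and ?D = "X $$ (1,0) \<cdot>\<^sub>m unit2 1 0"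
  have "X = ?A + ?B + ?C + ?D"
    using X by (intro mat2_eqI) (auto simp: unit2_def)
  hence "E X = E (?A + ?B + ?C + ?D)" by simp
  also have "\<dots> = E ?A + E ?B + E ?C + E ?D"
    using E by (simp add: lin_add)
  also have "\<dots> = X $$ (0,0) \<cdot>\<^sub>m E (unit2 0 0) + X $$ (1,1) \<cdot>\<^sub>m E (unit2 1 1)
     + X $$ (0,1) \<cdot>\<^sub>m E (unit2 0 1) + X $$ (1,0) \<cdot>\<^sub>m E (unit2 1 0)"
    using E by (simp add: lin_smult)
  finally have eq: "E X = X $$ (0,0) \<cdot>\<^sub>m E (unit2 0 0) + X $$ (1,1) \<cdot>\<^sub>m E (unit2 1 1)
     + X $$ (0,1) \<cdot>\<^sub>m E (unit2 0 1) + X $$ (1,0) \<cdot>\<^sub>m E (unit2 1 0)" .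
  have d: "\<And>i j. dim_row (E (unit2 i j)) = 2" "\<And>i j. dim_col (E (unit2 i j)) = 2"
    using lin_carrier[OF E unit2_carrier] by auto
  show ?thesis using k l by (subst eq) (simp add: d)
qed

definition en :: "real \<Rightarrow> real \<Rightarrow> nat \<Rightarrow> real" where
  "en E0 E1 i = (if i = 0 then E0 else E1)"

definition ph :: "real \<Rightarrow> real \<Rightarrow> nat \<Rightarrow> real \<Rightarrow> complex" where
  "ph E0 E1 i t = exp (- \<i> * of_real (en E0 E1 i * t))"

lemma conj_formula:
  assumes X: "X \<in> carrier_mat 2 2"
  shows "evol E0 E1 t * X * madj (evol E0 E1 t) =
    mat 2 2 (\<lambda>(k,l). ph E0 E1 k t * X $$ (k,l) * cnj (ph E0 E1 l t))"
  apply (rule mat2_eqI)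
  using X
  by (auto simp: evol_def madj_def mat_of_rows_list_def scalar_prod_def ph_def en_def numeral_2_eq_2 row_def col_def One_nat_def)

lemma ph_mult: "ph E0 E1 i t * cnj (ph E0 E1 j t) = exp (- \<i> * of_real ((en E0 E1 i - en E0 E1 j) * t))"
  unfolding ph_def exp_cnj
  by (simp add: exp_add[symmetric] algebra_simps)

lemma ph_same: "ph E0 E1 i t * cnj (ph E0 E1 i t) = 1"
  by (simp add: ph_mult)

lemma vanish:
  assumes cov: "covariant E0 E1 E" and E: "linear_map2 E" and ij: "i < 2" "j < 2" "k < 2" "l < 2"
    and D: "en E0 E1 i - en E0 E1 j \<noteq> en E0 E1 k - en E0 E1 l"
  shows "E (unit2 i j) $$ (k,l) = 0"
proof -
  define d where "d = (en E0 E1 i - en E0 E1 j) - (en E0 E1 k - en E0 E1 l)"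
  have d0: "d \<noteq> 0" using D by (simp add: d_def)
  define t where "t = pi / d"
  define w where "w = (\<lambda>i j. ph E0 E1 i t * cnj (ph E0 E1 j t))"
  have 1: "evol E0 E1 t * unit2 i j * madj (evol E0 E1 t) = w i j \<cdot>\<^sub>m unit2 i j"
    by (subst conj_formula) (auto simp: w_def unit2_def)
  have 2: "E (evol E0 E1 t * unit2 i j * madj (evol E0 E1 t)) = evol E0 E1 t * E (unit2 i j) * madj (evol E0 E1 t)"
    using cov unfolding covariant_def by simp
  have 3: "w i j \<cdot>\<^sub>m E (unit2 i j) = mat 2 2 (\<lambda>(k,l). ph E0 E1 k t * E (unit2 i j) $$ (k,l) * cnj (ph E0 E1 l t))"
    using 1 2 lin_smult[OF E unit2_carrier] conj_formula[OF lin_carrier[OF E unit2_carrier]] by simp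
  have cE: "E (unit2 i j) \<in> carrier_mat 2 2" by (rule lin_carrier[OF E unit2_carrier])
  have 4: "w i j * E (unit2 i j) $$ (k,l) = w k l * E (unit2 i j) $$ (k,l)"
  proof -
    have a: "(w i j \<cdot>\<^sub>m E (unit2 i j)) $$ (k,l) = w i j * E (unit2 i j) $$ (k,l)"
      using cE ij by simp
    have b: "(w i j \<cdot>\<^sub>m E (unit2 i j)) $$ (k,l) = ph E0 E1 k t * E (unit2 i j) $$ (k,l) * cnj (ph E0 E1 l t)"
      using 3 ij by simp
    have "w i j * E (unit2 i j) $$ (k,l) = ph E0 E1 k t * E (unit2 i j) $$ (k,l) * cnj (ph E0 E1 l t)"
      by (metis a b)
    thus ?thesis unfolding w_def by (simp add: ac_simps)
  qed
  have 5: "w i j = - w k l"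
  proof -
    have h: "(en E0 E1 i - en E0 E1 j) * t = (en E0 E1 k - en E0 E1 l) * t + pi"
      using d0 by (simp add: t_def d_def field_simps)
    have "w i j = exp (- \<i> * of_real ((en E0 E1 k - en E0 E1 l) * t) + (- \<i> * of_real pi))"
      unfolding w_def ph_mult h by (simp only: of_real_add distrib_left)
    also have "\<dots> = - w k l" unfolding w_def ph_mult exp_add
      by (simp add: exp_minus)
    finally show ?thesis .
  qed
  have "w k l \<noteq> 0" unfolding w_def ph_mult by simp
  thus ?thesis using 4 5 by simp
qed

lemma psd_list:
  assumes "psd n N" "length xs = n"
  shows "Im (\<Sum>i<n. \<Sum>j<n. cnj (xs!i) * N $$ (i,j) * xs!j) = 0 \<and>
         0 \<le> Re (\<Sum>i<n. \<Sum>j<n. cnj (xs!i) * N $$ (i,j) * xs!j)"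
proof -
  have v: "vec_of_list xs \<in> carrier_vec n" using assms(2) unfolding carrier_vec_def by simp
  have "\<forall>v\<in>carrier_vec n. Im (\<Sum>i<n. \<Sum>j<n. cnj (vec_index v i) * N $$ (i,j) * vec_index v j) = 0 \<and>
         0 \<le> Re (\<Sum>i<n. \<Sum>j<n. cnj (vec_index v i) * N $$ (i,j) * vec_index v j)"
    using assms(1) unfolding psd_def Let_def by (elim conjE)
  from bspec[OF this v] show ?thesis unfolding vec_of_list_index .
qed

lemma sum4: "(\<Sum>i<(4::nat). f i) = f 0 + f 1 + f 2 + (f 3 :: 'a::comm_monoid_add)"
  by (simp add: eval_nat_numeral add.assoc One_nat_def)

definition choi :: cmat where
  "choi = mat 4 4 (\<lambda>(i,j). if (i = 0 \<or> i = 3) \<and> (j = 0 \<or> j = 3) then 1 else 0)"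

lemma psd_choi: "psd 4 choi"
  unfolding psd_def Let_def
proof (intro conjI ballI)
  show "choi \<in> carrier_mat 4 4" by (simp add: choi_def)
  fix v :: "complex vec"
  let ?z = "vec_index v 0 + vec_index v 3"
  have q: "(\<Sum>i<4. \<Sum>j<4. cnj (vec_index v i) * choi $$ (i, j) * vec_index v j) = ?z * cnj ?z"
    apply (simp only: sum4)
    apply (simp add: choi_def)
    apply (simp add: algebra_simps)
    done
  show "Im (\<Sum>i<4. \<Sum>j<4. cnj (vec_index v i) * choi $$ (i, j) * vec_index v j) = 0"
    unfolding q complex_norm_square[symmetric] by simp
  show "0 \<le> Re (\<Sum>i<4. \<Sum>j<4. cnj (vec_index v i) * choi $$ (i, j) * vec_index v j)"
    unfolding q complex_norm_square[symmetric] by simp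
qed

lemma blk_choi: "p < 2 \<Longrightarrow> q < 2 \<Longrightarrow> blk choi p q = unit2 p q"
  by (rule mat2_eqI) (auto simp: blk_def choi_def unit2_def dest!: less2)

lemma ext_choi: "i < 4 \<Longrightarrow> j < 4 \<Longrightarrow>
   ext_map E 2 choi $$ (i,j) = E (unit2 (i div 2) (j div 2)) $$ (i mod 2, j mod 2)"
  unfolding ext_map_def by (simp add: blk_choi)

lemma discr:
  fixes a bb K :: real
  assumes "\<And>t. 0 \<le> a * K - 2 * t * K + bb * t^2" "0 \<le> K" "0 \<le> a" "0 \<le> bb"
  shows "K \<le> a * bb"
proof (cases "K = 0")
  case True thus ?thesis using assms by simp
next
  case False
  hence K: "K > 0" using assms by simp
  show ?thesis
  proof (cases "bb = 0")
    case True
    have "0 \<le> a * K - 2 * ((a*K+1)/(2*K)) * K" using assms(1)[of "(a*K+1)/(2*K)"] True by simp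
    also have "\<dots> = -1" using K by (simp add: field_simps)
    finally show ?thesis by simp
  next
    case False
    hence b: "bb > 0" using assms by simp
    have "0 \<le> a * K - 2 * (K/bb) * K + bb * (K/bb)^2" by (rule assms(1))
    also have "\<dots> = (a * bb - K) * K / bb" using b by (simp add: field_simps power2_eq_square)
    finally have "0 \<le> (a * bb - K) * K" using b by (simp add: zero_le_divide_iff)
    thus ?thesis using K by (simp add: zero_le_mult_iff)
  qed
qed

lemma cp_ineq:
  fixes A B C D :: complex
  assumes H: "\<And>x y. Im (cnj x * A * x + cnj x * C * y + cnj y * D * x + cnj y * B * y) = 0 \<and>
                  0 \<le> Re (cnj x * A * x + cnj x * C * y + cnj y * D * x + cnj y * B * y)"
  shows "Im A = 0" "Im B = 0" "0 \<le> Re A" "0 \<le> Re B" "D = cnj C" "cmod C ^ 2 \<le> Re A * Re B"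
proof -
  show a1: "Im A = 0" "0 \<le> Re A" using H[of 1 0] by auto
  show b1: "Im B = 0" "0 \<le> Re B" using H[of 0 1] by auto
  have "Im C + Im D = 0" using H[of 1 1] a1 b1 by simp
  moreover have "Re C - Re D = 0" using H[of 1 \<i>] a1 b1 by simp
  ultimately show D: "D = cnj C" by (intro complex_eqI) auto
  have "\<And>t::real. 0 \<le> Re A * (cmod C)^2 - 2 * t * (cmod C)^2 + Re B * t^2"
  proof -
    fix t :: real
    have "Re (cnj (-C) * A * (-C) + cnj (-C) * C * of_real t + cnj (of_real t) * D * (-C) + cnj (of_real t) * B * of_real t)
      = Re A * (cmod C)^2 - 2 * t * (cmod C)^2 + Re B * t^2"
      using a1 b1 by (simp add: D cmod_power2 algebra_simps power2_eq_square cmod_def real_sqrt_mult_self)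
    thus "0 \<le> Re A * (cmod C)^2 - 2 * t * (cmod C)^2 + Re B * t^2"
      using H[of "-C" "of_real t"] by simp
  qed
  thus "cmod C ^ 2 \<le> Re A * Re B" by (rule discr) (use a1 b1 in auto)
qed

lemma qubit_carrier[simp]: "qubit r a \<in> carrier_mat 2 2"
  unfolding qubit_def mat_of_rows_list_def carrier_mat_def by simp
lemma qubit_idx[simp]: "qubit r a $$ (0,0) = of_real r" "qubit r a $$ (0,1) = a"
  "qubit r a $$ (1,0) = cnj a" "qubit r a $$ (1,1) = of_real (1 - r)"
  unfolding qubit_def mat_of_rows_list_def by simp_all
lemma gibbs_carrier[simp]: "gibbs \<beta> E0 E1 \<in> carrier_mat 2 2"
  unfolding gibbs_def mat_of_rows_list_def carrier_mat_def by simp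
lemma gibbs_idx[simp]: "gibbs \<beta> E0 E1 $$ (0,0) = of_real (gibbs_weight \<beta> E0 E1)"
  "gibbs \<beta> E0 E1 $$ (0,1) = 0" "gibbs \<beta> E0 E1 $$ (1,0) = 0"
  "gibbs \<beta> E0 E1 $$ (1,1) = of_real (1 - gibbs_weight \<beta> E0 E1)"
  unfolding gibbs_def mat_of_rows_list_def by simp_all

lemma choi_Q:
  assumes "psd 4 (ext_map E 2 choi)"
  shows "Im (cnj x * E (unit2 0 0) $$ (0,0) * x + cnj x * E (unit2 0 1) $$ (0,1) * y
            + cnj y * E (unit2 1 0) $$ (1,0) * x + cnj y * E (unit2 1 1) $$ (1,1) * y) = 0 \<and>
         0 \<le> Re (cnj x * E (unit2 0 0) $$ (0,0) * x + cnj x * E (unit2 0 1) $$ (0,1) * y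
            + cnj y * E (unit2 1 0) $$ (1,0) * x + cnj y * E (unit2 1 1) $$ (1,1) * y)"
proof -
  have eq: "(\<Sum>i<4. \<Sum>j<4. cnj ([x,0,0,y]!i) * ext_map E 2 choi $$ (i,j) * [x,0,0,y]!j) =
     cnj x * E (unit2 0 0) $$ (0,0) * x + cnj x * E (unit2 0 1) $$ (0,1) * y
            + cnj y * E (unit2 1 0) $$ (1,0) * x + cnj y * E (unit2 1 1) $$ (1,1) * y"
    apply (simp only: sum4)
    apply (simp add: ext_choi One_nat_def)
    done
  have L: "length [x,0,0,y] = 4" by simp
  from psd_list[OF assms L] show ?thesis unfolding eq .
qed

lemma choi_diag:
  assumes "psd 4 (ext_map E 2 choi)"
  shows "Im (E (unit2 0 0) $$ (1,1)) = 0" "0 \<le> Re (E (unit2 0 0) $$ (1,1))"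
        "Im (E (unit2 1 1) $$ (0,0)) = 0" "0 \<le> Re (E (unit2 1 1) $$ (0,0))"
proof -
  have eq1: "(\<Sum>i<4. \<Sum>j<4. cnj ([0,1,0,0]!i) * ext_map E 2 choi $$ (i,j) * [0,1,0,0]!j) =
     E (unit2 0 0) $$ (1,1)"
    apply (simp only: sum4)
    apply (simp add: ext_choi One_nat_def)
    done
  have L1: "length [0,1,0,0::complex] = 4" by simp
  from psd_list[OF assms L1] show "Im (E (unit2 0 0) $$ (1,1)) = 0" "0 \<le> Re (E (unit2 0 0) $$ (1,1))"
    unfolding eq1 by auto
  have eq2: "(\<Sum>i<4. \<Sum>j<4. cnj ([0,0,1,0]!i) * ext_map E 2 choi $$ (i,j) * [0,0,1,0]!j) =
     E (unit2 1 1) $$ (0,0)"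
    apply (simp only: sum4)
    apply (simp add: ext_choi One_nat_def)
    done
  have L2: "length [0,0,1,0::complex] = 4" by simp
  from psd_list[OF assms L2] show "Im (E (unit2 1 1) $$ (0,0)) = 0" "0 \<le> Re (E (unit2 1 1) $$ (0,0))"
    unfolding eq2 by auto
qed

lemma gpc_structure:
  assumes G: "E \<in> GPC \<beta> E0 E1" and E01: "E0 \<noteq> E1"
  obtains p00 p01 p10 p11 :: real and c :: complex where
   "0 \<le> p00" "0 \<le> p01" "0 \<le> p10" "0 \<le> p11" "p00 + p10 = 1" "p01 + p11 = 1"
   "cmod c ^ 2 \<le> p00 * p11"
   "gibbs_weight \<beta> E0 E1 * p00 + (1 - gibbs_weight \<beta> E0 E1) * p01 = gibbs_weight \<beta> E0 E1"
   "\<And>r a. E (qubit r a) $$ (0,0) = of_real (r * p00 + (1 - r) * p01)"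
   "\<And>r a. E (qubit r a) $$ (0,1) = a * c"
proof -
  have E: "linear_map2 E" and cp: "completely_positive E" and tp: "trace_preserving E"
    and gib: "E (gibbs \<beta> E0 E1) = gibbs \<beta> E0 E1" and cov: "covariant E0 E1 E"
    using G unfolding GPC_def quantum_channel_def by auto
  have en: "en E0 E1 0 = E0" "en E0 E1 1 = E1" by (simp_all add: en_def)
  have z1: "E (unit2 0 0) $$ (0,1) = 0" by (rule vanish[OF cov E]) (use E01 en in auto)
  have z2: "E (unit2 1 1) $$ (0,1) = 0" by (rule vanish[OF cov E]) (use E01 en in auto)
  have z3: "E (unit2 0 1) $$ (0,0) = 0" by (rule vanish[OF cov E]) (use E01 en in auto)
  have z4: "E (unit2 1 0) $$ (0,0) = 0" by (rule vanish[OF cov E]) (use E01 en in auto)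
  have z5: "E (unit2 1 0) $$ (0,1) = 0" by (rule vanish[OF cov E]) (use E01 en in auto)
  have P: "psd 4 (ext_map E 2 choi)"
    using cp psd_choi unfolding completely_positive_def by (metis mult_2 numeral_Bit0)
  note Q = cp_ineq[OF choi_Q[OF P]]
  note Dg = choi_diag[OF P]
  define A where "A = E (unit2 0 0) $$ (0,0)"
  define B where "B = E (unit2 1 1) $$ (1,1)"
  define A1 where "A1 = E (unit2 0 0) $$ (1,1)"
  define B1 where "B1 = E (unit2 1 1) $$ (0,0)"
  define c where "c = E (unit2 0 1) $$ (0,1)"
  have A: "A = of_real (Re A)" using Q(1) unfolding A_def by (simp add: complex_eq_iff)
  have B: "B = of_real (Re B)" using Q(2) unfolding B_def by (simp add: complex_eq_iff)
  have A1: "A1 = of_real (Re A1)" using Dg(1) unfolding A1_def by (simp add: complex_eq_iff)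
  have B1: "B1 = of_real (Re B1)" using Dg(3) unfolding B1_def by (simp add: complex_eq_iff)
  have cE: "\<And>i j. E (unit2 i j) \<in> carrier_mat 2 2" by (rule lin_carrier[OF E unit2_carrier])
  have tr: "\<And>i j. mtrace (E (unit2 i j)) = E (unit2 i j) $$ (0,0) + E (unit2 i j) $$ (1,1)"
  proof -
    fix i j
    have "dim_row (E (unit2 i j)) = 2" using cE[of i j] by auto
    thus "mtrace (E (unit2 i j)) = E (unit2 i j) $$ (0,0) + E (unit2 i j) $$ (1,1)"
      unfolding mtrace_def by (simp add: numeral_2_eq_2 One_nat_def)
  qed
  have tu: "\<And>i. i < 2 \<Longrightarrow> mtrace (unit2 i i) = 1"
    unfolding mtrace_def unit2_def by (auto simp: numeral_2_eq_2 dest!: less2)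
  have t0: "A + A1 = 1" using tp tr[of 0 0] tu[of 0] unfolding trace_preserving_def A_def A1_def by simp
  have t1: "B1 + B = 1" using tp tr[of 1 1] tu[of 1] unfolding trace_preserving_def B_def B1_def by simp
  let ?g = "gibbs_weight \<beta> E0 E1"
  have "E (gibbs \<beta> E0 E1) $$ (0,0) = of_real ?g * A + of_real (1 - ?g) * B1"
    using lin_decomp[OF E gibbs_carrier, of 0 0] unfolding A_def B1_def by simp
  hence gg: "of_real ?g * A + of_real (1 - ?g) * B1 = of_real ?g" using gib by simp
  show ?thesis
  proof (rule that[of "Re A" "Re B1" "Re A1" "Re B" c])
    show "0 \<le> Re A" "0 \<le> Re B" using Q unfolding A_def B_def by auto
    show "0 \<le> Re A1" "0 \<le> Re B1" using Dg unfolding A1_def B1_def by auto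
    show "Re A + Re A1 = 1" using arg_cong[OF t0, of Re] by simp
    show "Re B1 + Re B = 1" using arg_cong[OF t1, of Re] by simp
    show "cmod c ^ 2 \<le> Re A * Re B" using Q unfolding A_def B_def c_def by auto
    show "?g * Re A + (1 - ?g) * Re B1 = ?g" using arg_cong[OF gg, of Re] by simp
    fix r a
    show "E (qubit r a) $$ (0,0) = of_real (r * Re A + (1 - r) * Re B1)"
      using lin_decomp[OF E qubit_carrier, of 0 0 r a] z3 z4 A B1 unfolding A_def B1_def by simp
    show "E (qubit r a) $$ (0,1) = a * c"
      using lin_decomp[OF E qubit_carrier, of 0 1 r a] z1 z2 z5 unfolding c_def by simp
  qed
qed




definition Emap :: "real \<Rightarrow> real \<Rightarrow> real \<Rightarrow> real \<Rightarrow> complex \<Rightarrow> cmat \<Rightarrow> cmat" where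
  "Emap p00 p01 p10 p11 c X = mat 2 2 (\<lambda>(i,j). if i = 0 then (if j = 0 then of_real p00 * X $$ (0,0) + of_real p01 * X $$ (1,1) else c * X $$ (0,1))
      else (if j = 0 then cnj c * X $$ (1,0) else of_real p10 * X $$ (0,0) + of_real p11 * X $$ (1,1)))"

lemma Emap_carrier[simp]: "Emap p00 p01 p10 p11 c X \<in> carrier_mat 2 2"
  unfolding Emap_def carrier_mat_def by simp

lemma Emap_dims[simp]: "dim_row (Emap p00 p01 p10 p11 c X) = 2" "dim_col (Emap p00 p01 p10 p11 c X) = 2"
  unfolding Emap_def by simp_all

lemma sum2: "(\<Sum>i<(2::nat). f i) = f 0 + (f 1 :: 'a::comm_monoid_add)"
  by (simp add: numeral_2_eq_2 One_nat_def)

lemma Emap_idx[simp]: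
  "Emap p00 p01 p10 p11 c X $$ (0,0) = of_real p00 * X $$ (0,0) + of_real p01 * X $$ (1,1)"
  "Emap p00 p01 p10 p11 c X $$ (0,1) = c * X $$ (0,1)"
  "Emap p00 p01 p10 p11 c X $$ (1,0) = cnj c * X $$ (1,0)"
  "Emap p00 p01 p10 p11 c X $$ (1,1) = of_real p10 * X $$ (0,0) + of_real p11 * X $$ (1,1)"
  unfolding Emap_def by simp_all

lemma split_sum: "(\<Sum>i<2*(k::nat). f i) = (\<Sum>p<k. f (2*p) + (f (2*p+1) :: 'a::comm_monoid_add))"
proof (induction k)
  case 0 thus ?case by simp
next
  case (Suc k)
  have "2 * Suc k = Suc (Suc (2*k))" by simp
  thus ?case using Suc by (simp add: add.assoc One_nat_def)
qed

lemma split2: "(\<Sum>i<2*(k::nat). \<Sum>j<2*k. F i j) = (\<Sum>p<k. \<Sum>q<k.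
   F (2*p) (2*q) + F (2*p) (2*q+1) + F (2*p+1) (2*q) + (F (2*p+1) (2*q+1) :: 'a::comm_monoid_add))"
  by (simp add: split_sum sum.distrib add_ac)

lemma blk_idx: "blk M p q $$ (0,0) = M $$ (2*p, 2*q)" "blk M p q $$ (0,1) = M $$ (2*p, 2*q+1)"
   "blk M p q $$ (1,0) = M $$ (2*p+1, 2*q)" "blk M p q $$ (1,1) = M $$ (2*p+1, 2*q+1)"
  unfolding blk_def by simp_all

lemma ext_idx: assumes "p < k" "q < k" shows
  "ext_map E k M $$ (2*p, 2*q) = E (blk M p q) $$ (0,0)"
  "ext_map E k M $$ (2*p, 2*q+1) = E (blk M p q) $$ (0,1)"
  "ext_map E k M $$ (2*p+1, 2*q) = E (blk M p q) $$ (1,0)"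
  "ext_map E k M $$ (2*p+1, 2*q+1) = E (blk M p q) $$ (1,1)"
  unfolding ext_map_def using assms by simp_all

lemma psd_vec:
  assumes "psd n M" "w \<in> carrier_vec n"
  shows "Im (\<Sum>i<n. \<Sum>j<n. cnj (vec_index w i) * M $$ (i,j) * vec_index w j) = 0 \<and>
         0 \<le> Re (\<Sum>i<n. \<Sum>j<n. cnj (vec_index w i) * M $$ (i,j) * vec_index w j)"
proof -
  have "\<forall>v\<in>carrier_vec n. Im (\<Sum>i<n. \<Sum>j<n. cnj (vec_index v i) * M $$ (i,j) * vec_index v j) = 0 \<and>
         0 \<le> Re (\<Sum>i<n. \<Sum>j<n. cnj (vec_index v i) * M $$ (i,j) * vec_index v j)"
    using assms(1) unfolding psd_def Let_def by (elim conjE)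
  from bspec[OF this assms(2)] show ?thesis .
qed

lemma Emap_cp:
  assumes p: "0 \<le> p00" "0 \<le> p01" "0 \<le> p10" "0 \<le> p11" and cc: "cmod c ^ 2 \<le> p00 * p11"
  shows "completely_positive (Emap p00 p01 p10 p11 c)"
  unfolding completely_positive_def
proof (intro allI impI)
  fix k :: nat and M assume M: "psd (2*k) M"
  let ?E = "Emap p00 p01 p10 p11 c"
  let ?N = "ext_map ?E k M"
  define u0 :: complex where "u0 = of_real (sqrt p00)"
  define u1 :: complex where "u1 = cnj c / of_real (sqrt p00)"
  define wr :: real where "wr = sqrt (p11 - cmod u1 ^ 2)"
  define s10 :: real where "s10 = sqrt p10"
  define s01 :: real where "s01 = sqrt p01"
  have f1: "complex_of_real p00 = u0 * cnj u0" unfolding u0_def using p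
    by (simp flip: of_real_mult)
  have f2: "complex_of_real p01 = of_real s01 * of_real s01" unfolding s01_def using p
    by (simp flip: of_real_mult)
  have f3: "complex_of_real p10 = of_real s10 * of_real s10" unfolding s10_def using p
    by (simp flip: of_real_mult)
  have f4: "c = u0 * cnj u1"
  proof (cases "p00 = 0")
    case True
    hence "cmod c ^ 2 \<le> 0" using cc by simp
    hence "c = 0" by simp
    thus ?thesis using True unfolding u0_def by simp
  next
    case False
    hence "sqrt p00 \<noteq> 0" using p by simp
    thus ?thesis unfolding u0_def u1_def by (simp add: field_simps)
  qed
  have u1le: "cmod u1 ^ 2 \<le> p11"
  proof (cases "p00 = 0")
    case True thus ?thesis unfolding u1_def using p by simp
  next
    case False
    hence pp: "p00 > 0" using p by simp
    have "cmod u1 ^ 2 = cmod c ^ 2 / p00" unfolding u1_def using pp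
      by (simp add: norm_divide power_divide)
    also have "\<dots> \<le> p11" using cc pp by (simp add: divide_le_eq mult.commute)
    finally show ?thesis .
  qed
  have f5: "complex_of_real p11 = u1 * cnj u1 + of_real wr * of_real wr"
  proof -
    have "wr * wr = p11 - cmod u1 ^ 2" unfolding wr_def using u1le by simp
    hence "complex_of_real (wr * wr) = complex_of_real (p11 - cmod u1 ^ 2)" by (rule arg_cong)
    hence "complex_of_real wr * of_real wr = of_real p11 - of_real (cmod u1 ^ 2)"
      by (simp only: of_real_mult of_real_diff)
    hence "complex_of_real wr * of_real wr = of_real p11 - u1 * cnj u1"
      by (simp only: complex_norm_square)
    thus ?thesis by simp
  qed
  show "psd (2*k) ?N" unfolding psd_def Let_def
  proof (intro conjI ballI)
    show "?N \<in> carrier_mat (2*k) (2*k)" unfolding ext_map_def by simp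
    fix v :: "complex vec" assume v: "v \<in> carrier_vec (2*k)"
    let ?V = "vec_index v"
    define w1 where "w1 = vec (2*k) (\<lambda>i. if even i then cnj u0 * ?V i else cnj u1 * ?V i)"
    define w2 where "w2 = vec (2*k) (\<lambda>i. if even i then 0 else of_real wr * ?V i)"
    define w3 where "w3 = vec (2*k) (\<lambda>i. if even i then of_real s10 * ?V (i+1) else 0)"
    define w4 where "w4 = vec (2*k) (\<lambda>i. if even i then 0 else of_real s01 * ?V (i-1))"
    define QM where "QM = (\<lambda>w. \<Sum>i<2*k. \<Sum>j<2*k. cnj (vec_index w i) * M $$ (i,j) * vec_index w j)"
    have P: "\<And>w. w \<in> carrier_vec (2*k) \<Longrightarrow> Im (QM w) = 0 \<and> 0 \<le> Re (QM w)"
      unfolding QM_def by (rule psd_vec[OF M])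
    have c1: "w1 \<in> carrier_vec (2*k)" "w2 \<in> carrier_vec (2*k)" "w3 \<in> carrier_vec (2*k)" "w4 \<in> carrier_vec (2*k)"
      unfolding w1_def w2_def w3_def w4_def by simp_all
    have key: "(\<Sum>i<2*k. \<Sum>j<2*k. cnj (?V i) * ?N $$ (i,j) * ?V j) = QM w1 + QM w2 + QM w3 + QM w4"
      unfolding QM_def split2 sum.distrib[symmetric]
    proof (intro sum.cong refl)
      fix p q assume "p \<in> {..<k}" "q \<in> {..<k}"
      hence pq: "p < k" "q < k" by auto
      hence ix: "2*p < 2*k" "2*p+1 < 2*k" "2*q < 2*k" "2*q+1 < 2*k" by auto
      show "cnj (?V (2*p)) * ?N $$ (2*p, 2*q) * ?V (2*q) + cnj (?V (2*p)) * ?N $$ (2*p, 2*q+1) * ?V (2*q+1)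
          + cnj (?V (2*p+1)) * ?N $$ (2*p+1, 2*q) * ?V (2*q) + cnj (?V (2*p+1)) * ?N $$ (2*p+1, 2*q+1) * ?V (2*q+1) =
        cnj (vec_index w1 (2*p)) * M $$ (2*p, 2*q) * vec_index w1 (2*q) + cnj (vec_index w1 (2*p)) * M $$ (2*p, 2*q+1) * vec_index w1 (2*q+1)
          + cnj (vec_index w1 (2*p+1)) * M $$ (2*p+1, 2*q) * vec_index w1 (2*q) + cnj (vec_index w1 (2*p+1)) * M $$ (2*p+1, 2*q+1) * vec_index w1 (2*q+1) +
        (cnj (vec_index w2 (2*p)) * M $$ (2*p, 2*q) * vec_index w2 (2*q) + cnj (vec_index w2 (2*p)) * M $$ (2*p, 2*q+1) * vec_index w2 (2*q+1)
          + cnj (vec_index w2 (2*p+1)) * M $$ (2*p+1, 2*q) * vec_index w2 (2*q) + cnj (vec_index w2 (2*p+1)) * M $$ (2*p+1, 2*q+1) * vec_index w2 (2*q+1)) +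
        (cnj (vec_index w3 (2*p)) * M $$ (2*p, 2*q) * vec_index w3 (2*q) + cnj (vec_index w3 (2*p)) * M $$ (2*p, 2*q+1) * vec_index w3 (2*q+1)
          + cnj (vec_index w3 (2*p+1)) * M $$ (2*p+1, 2*q) * vec_index w3 (2*q) + cnj (vec_index w3 (2*p+1)) * M $$ (2*p+1, 2*q+1) * vec_index w3 (2*q+1)) +
        (cnj (vec_index w4 (2*p)) * M $$ (2*p, 2*q) * vec_index w4 (2*q) + cnj (vec_index w4 (2*p)) * M $$ (2*p, 2*q+1) * vec_index w4 (2*q+1)
          + cnj (vec_index w4 (2*p+1)) * M $$ (2*p+1, 2*q) * vec_index w4 (2*q) + cnj (vec_index w4 (2*p+1)) * M $$ (2*p+1, 2*q+1) * vec_index w4 (2*q+1))"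
        unfolding ext_idx[OF pq] Emap_idx blk_idx w1_def w2_def w3_def w4_def
        using ix
        apply (simp add: f1 f2 f3 f5)
        apply (subst f4)+
        apply (simp add: algebra_simps)
        done
    qed
    have "Im (QM w1 + QM w2 + QM w3 + QM w4) = 0" using P[OF c1(1)] P[OF c1(2)] P[OF c1(3)] P[OF c1(4)] by simp
    moreover have "0 \<le> Re (QM w1 + QM w2 + QM w3 + QM w4)" using P[OF c1(1)] P[OF c1(2)] P[OF c1(3)] P[OF c1(4)] by simp
    ultimately show "Im (\<Sum>i<2*k. \<Sum>j<2*k. cnj (?V i) * ?N $$ (i,j) * ?V j) = 0"
      "0 \<le> Re (\<Sum>i<2*k. \<Sum>j<2*k. cnj (?V i) * ?N $$ (i,j) * ?V j)" unfolding key by auto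
  qed
qed

lemma ph_same2: "ph E0 E1 i t * x * cnj (ph E0 E1 i t) = x"
proof -
  have "ph E0 E1 i t * x * cnj (ph E0 E1 i t) = (ph E0 E1 i t * cnj (ph E0 E1 i t)) * x" by (simp add: ac_simps)
  thus ?thesis by (simp add: ph_same)
qed

lemma conj_entries:
  assumes X: "X \<in> carrier_mat 2 2"
  shows "evol E0 E1 t * X * madj (evol E0 E1 t) \<in> carrier_mat 2 2"
    "(evol E0 E1 t * X * madj (evol E0 E1 t)) $$ (0,0) = X $$ (0,0)"
    "(evol E0 E1 t * X * madj (evol E0 E1 t)) $$ (1,1) = X $$ (1,1)"
    "(evol E0 E1 t * X * madj (evol E0 E1 t)) $$ (0,1) = (ph E0 E1 0 t * cnj (ph E0 E1 1 t)) * X $$ (0,1)"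
    "(evol E0 E1 t * X * madj (evol E0 E1 t)) $$ (1,0) = cnj (ph E0 E1 0 t * cnj (ph E0 E1 1 t)) * X $$ (1,0)"
proof -
  note Y = conj_formula[OF X, of E0 E1 t]
  show "evol E0 E1 t * X * madj (evol E0 E1 t) \<in> carrier_mat 2 2" unfolding Y by simp
  show "(evol E0 E1 t * X * madj (evol E0 E1 t)) $$ (0,0) = X $$ (0,0)" unfolding Y by (simp add: ph_same ph_same2)
  show "(evol E0 E1 t * X * madj (evol E0 E1 t)) $$ (1,1) = X $$ (1,1)" unfolding Y by (simp add: ph_same ph_same2)
  show "(evol E0 E1 t * X * madj (evol E0 E1 t)) $$ (0,1) = (ph E0 E1 0 t * cnj (ph E0 E1 1 t)) * X $$ (0,1)"
    unfolding Y by (simp add: algebra_simps)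
  show "(evol E0 E1 t * X * madj (evol E0 E1 t)) $$ (1,0) = cnj (ph E0 E1 0 t * cnj (ph E0 E1 1 t)) * X $$ (1,0)"
    unfolding Y by (simp add: algebra_simps)
qed

lemma mtrace2: "X \<in> carrier_mat 2 2 \<Longrightarrow> mtrace X = X $$ (0,0) + X $$ (1,1)"
  unfolding mtrace_def by (simp add: numeral_2_eq_2 One_nat_def)

lemma Emap_GPC:
  assumes p: "0 \<le> p00" "0 \<le> p01" "0 \<le> p10" "0 \<le> p11" and s: "p00 + p10 = 1" "p01 + p11 = 1"
    and cc: "cmod c ^ 2 \<le> p00 * p11"
    and gg: "gibbs_weight \<beta> E0 E1 * p00 + (1 - gibbs_weight \<beta> E0 E1) * p01 = gibbs_weight \<beta> E0 E1"
  shows "Emap p00 p01 p10 p11 c \<in> GPC \<beta> E0 E1"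
proof -
  let ?E = "Emap p00 p01 p10 p11 c"
  have s': "complex_of_real p10 = 1 - of_real p00" "complex_of_real p11 = 1 - of_real p01"
    using s by (simp_all add: algebra_simps flip: of_real_add)
  have lin: "linear_map2 ?E" unfolding linear_map2_def
  proof (intro conjI ballI allI)
    fix X Y :: cmat and c1 d1 :: complex assume X: "X \<in> carrier_mat 2 2" and Y: "Y \<in> carrier_mat 2 2"
    show "?E (c1 \<cdot>\<^sub>m X + d1 \<cdot>\<^sub>m Y) = c1 \<cdot>\<^sub>m ?E X + d1 \<cdot>\<^sub>m ?E Y"
      by (rule mat2_eqI) (use X Y in \<open>simp_all add: algebra_simps\<close>)
  qed simp
  have tp: "trace_preserving ?E" unfolding trace_preserving_def
  proof
    fix X :: cmat assume X: "X \<in> carrier_mat 2 2"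
    show "mtrace (?E X) = mtrace X"
      using X by (simp add: mtrace2 s' algebra_simps)
  qed
  have cov: "covariant E0 E1 ?E" unfolding covariant_def
  proof (intro allI ballI)
    fix t :: real and X :: cmat assume X: "X \<in> carrier_mat 2 2"
    show "?E (evol E0 E1 t * X * madj (evol E0 E1 t)) = evol E0 E1 t * ?E X * madj (evol E0 E1 t)"
      using conj_entries[OF X, of E0 E1 t] conj_entries[OF Emap_carrier, of E0 E1 t p00 p01 p10 p11 c X]
      by (intro mat2_eqI) (simp_all add: algebra_simps)
  qed
  have gib: "?E (gibbs \<beta> E0 E1) = gibbs \<beta> E0 E1"
  proof (rule mat2_eqI)
    show "?E (gibbs \<beta> E0 E1) $$ (0,0) = gibbs \<beta> E0 E1 $$ (0,0)"
      using arg_cong[OF gg, of complex_of_real] by (simp add: algebra_simps)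
    show "?E (gibbs \<beta> E0 E1) $$ (1,1) = gibbs \<beta> E0 E1 $$ (1,1)"
      using arg_cong[OF gg, of complex_of_real] by (simp add: s' algebra_simps)
  qed simp_all
  show ?thesis unfolding GPC_def quantum_channel_def
    using lin tp cov gib Emap_cp[OF p cc] by simp
qed

lemma Emap_qubit:
  assumes s: "p00 + p10 = 1" "p01 + p11 = 1"
  shows "Emap p00 p01 p10 p11 c (qubit r a) = qubit (r * p00 + (1 - r) * p01) (c * a)"
proof -
  have s': "complex_of_real p10 = 1 - of_real p00" "complex_of_real p11 = 1 - of_real p01"
    using s by (simp_all add: algebra_simps flip: of_real_add)
  show ?thesis by (rule mat2_eqI) (simp_all add: s' algebra_simps)
qed

lemma diagv_eq: "diagv x = diagv y \<longleftrightarrow> x = y"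
proof
  assume "diagv x = diagv y"
  hence "vec_index (diagv x) 0 = vec_index (diagv y) 0" by simp
  thus "x = y" unfolding diagv_def vec_of_list_index by simp
qed simp

lemma mv2: "A \<in> carrier_mat 2 2 \<Longrightarrow> A *\<^sub>v vec_of_list [x, y] =
   vec_of_list [A $$ (0,0) * x + A $$ (0,1) * y, A $$ (1,0) * x + A $$ (1,1) * y]"
proof (rule eq_vecI)
  assume A: "A \<in> carrier_mat 2 2"
  fix i assume "i < dim_vec (vec_of_list [A $$ (0,0) * x + A $$ (0,1) * y, A $$ (1,0) * x + A $$ (1,1) * y])"
  hence "i = 0 \<or> i = 1" by auto
  thus "vec_index (A *\<^sub>v vec_of_list [x, y]) i =
    vec_index (vec_of_list [A $$ (0,0) * x + A $$ (0,1) * y, A $$ (1,0) * x + A $$ (1,1) * y]) i"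
    using A by (auto simp: scalar_prod_def row_def vec_of_list_index sum2 atLeast0LessThan One_nat_def simp del: vec_of_list_Cons)
qed simp

lemma vl2_eq: "vec_of_list [a, b] = vec_of_list [c, d] \<longleftrightarrow> a = c \<and> b = d"
proof
  assume h: "vec_of_list [a, b] = vec_of_list [c, d]"
  have "vec_index (vec_of_list [a, b]) 0 = vec_index (vec_of_list [c, d]) 0"
       "vec_index (vec_of_list [a, b]) 1 = vec_index (vec_of_list [c, d]) 1" using h by simp_all
  thus "a = c \<and> b = d" unfolding vec_of_list_index by simp
qed simp

lemma relmaj_iff:
  "rel_majorizes 2 (diagv r) (diagv g) (diagv s) (diagv g) \<longleftrightarrow>
   (\<exists>p00 p01 p10 p11. 0 \<le> p00 \<and> 0 \<le> p01 \<and> 0 \<le> p10 \<and> 0 \<le> p11 \<and> p00 + p10 = 1 \<and> p01 + p11 = 1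
      \<and> r * p00 + (1 - r) * p01 = s \<and> g * p00 + (1 - g) * p01 = g)"
proof
  assume "rel_majorizes 2 (diagv r) (diagv g) (diagv s) (diagv g)"
  then obtain E where E: "E \<in> carrier_mat 2 2" "\<forall>i<2. \<forall>j<2. E $$ (i, j) \<ge> 0"
     "\<forall>j<2. (\<Sum>i<2. E $$ (i, j)) = 1" "E *\<^sub>v diagv r = diagv s" "E *\<^sub>v diagv g = diagv g"
    unfolding rel_majorizes_def by blast
  have cs: "E $$ (0,0) + E $$ (1,0) = 1" "E $$ (0,1) + E $$ (1,1) = 1"
    using E(3) by (auto simp: numeral_2_eq_2 One_nat_def)
  have r: "E $$ (0,0) * r + E $$ (0,1) * (1 - r) = s" using E(4) unfolding diagv_def mv2[OF E(1)] vl2_eq by simp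
  have g: "E $$ (0,0) * g + E $$ (0,1) * (1 - g) = g" using E(5) unfolding diagv_def mv2[OF E(1)] vl2_eq by simp
  show "\<exists>p00 p01 p10 p11. 0 \<le> p00 \<and> 0 \<le> p01 \<and> 0 \<le> p10 \<and> 0 \<le> p11 \<and> p00 + p10 = 1 \<and> p01 + p11 = 1
      \<and> r * p00 + (1 - r) * p01 = s \<and> g * p00 + (1 - g) * p01 = g"
    apply (rule exI[of _ "E $$ (0,0)"], rule exI[of _ "E $$ (0,1)"], rule exI[of _ "E $$ (1,0)"], rule exI[of _ "E $$ (1,1)"])
    using E(2) cs r g by (auto simp: ac_simps)
next
  assume "\<exists>p00 p01 p10 p11. 0 \<le> p00 \<and> 0 \<le> p01 \<and> 0 \<le> p10 \<and> 0 \<le> p11 \<and> p00 + p10 = 1 \<and> p01 + p11 = 1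
      \<and> r * p00 + (1 - r) * p01 = s \<and> g * p00 + (1 - g) * p01 = g"
  then obtain p00 p01 p10 p11 where h: "0 \<le> p00" "0 \<le> p01" "0 \<le> p10" "0 \<le> p11" "p00 + p10 = 1" "p01 + p11 = 1"
      "r * p00 + (1 - r) * p01 = s" "g * p00 + (1 - g) * p01 = g" by blast
  define E :: "real mat" where "E = mat 2 2 (\<lambda>(i,j). if i = 0 then (if j = 0 then p00 else p01) else (if j = 0 then p10 else p11))"
  have Ec: "E \<in> carrier_mat 2 2" unfolding E_def by simp
  have Ei: "E $$ (0,0) = p00" "E $$ (0,1) = p01" "E $$ (1,0) = p10" "E $$ (1,1) = p11" unfolding E_def by simp_all
  show "rel_majorizes 2 (diagv r) (diagv g) (diagv s) (diagv g)" unfolding rel_majorizes_def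
  proof (intro bexI[OF _ Ec] conjI allI impI)
    fix i j :: nat assume "i < 2" "j < 2"
    thus "0 \<le> E $$ (i,j)" using h Ei by (auto dest!: less2)
  next
    fix j :: nat assume "j < 2"
    hence "j = 0 \<or> j = 1" by auto
    thus "(\<Sum>i<2. E $$ (i,j)) = 1" unfolding sum2 using h Ei by auto
  next
    have e: "p10 = 1 - p00" "p11 = 1 - p01" using h by linarith+
    show "E *\<^sub>v diagv r = diagv s" unfolding diagv_def mv2[OF Ec] vl2_eq Ei using h
      by (simp add: e algebra_simps)
    show "E *\<^sub>v diagv g = diagv g" unfolding diagv_def mv2[OF Ec] vl2_eq Ei using h
      by (simp add: e algebra_simps)
  qed
qed

lemma conv_iff:
  assumes E01: "E0 \<noteq> E1"
  shows "GPC_convertible \<beta> E0 E1 (qubit r a) (qubit s b) \<longleftrightarrow>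
    (\<exists>p00 p01 p10 p11 c. 0 \<le> p00 \<and> 0 \<le> p01 \<and> 0 \<le> p10 \<and> 0 \<le> p11 \<and> p00 + p10 = 1 \<and> p01 + p11 = 1 \<and>
       cmod c ^ 2 \<le> p00 * p11 \<and>
       gibbs_weight \<beta> E0 E1 * p00 + (1 - gibbs_weight \<beta> E0 E1) * p01 = gibbs_weight \<beta> E0 E1 \<and>
       r * p00 + (1 - r) * p01 = s \<and> c * a = b)"
proof
  assume "GPC_convertible \<beta> E0 E1 (qubit r a) (qubit s b)"
  then obtain E where E: "E \<in> GPC \<beta> E0 E1" "E (qubit r a) = qubit s b"
    unfolding GPC_convertible_def by blast
  obtain p00 p01 p10 p11 c where h: "0 \<le> p00" "0 \<le> p01" "0 \<le> p10" "0 \<le> p11" "p00 + p10 = 1" "p01 + p11 = 1"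
   "cmod c ^ 2 \<le> p00 * p11"
   "gibbs_weight \<beta> E0 E1 * p00 + (1 - gibbs_weight \<beta> E0 E1) * p01 = gibbs_weight \<beta> E0 E1"
   "\<And>r a. E (qubit r a) $$ (0,0) = of_real (r * p00 + (1 - r) * p01)"
   "\<And>r a. E (qubit r a) $$ (0,1) = a * c"
    by (rule gpc_structure[OF E(1) E01]) (rule that, assumption+)
  have "complex_of_real (r * p00 + (1 - r) * p01) = of_real s" using h(9)[of r a] E(2) by simp
  hence rs: "r * p00 + (1 - r) * p01 = s" by (simp only: of_real_eq_iff)
  have ca: "c * a = b" using h(10)[of r a] E(2) by (simp add: mult.commute)
  show "\<exists>p00 p01 p10 p11 c. 0 \<le> p00 \<and> 0 \<le> p01 \<and> 0 \<le> p10 \<and> 0 \<le> p11 \<and> p00 + p10 = 1 \<and> p01 + p11 = 1 \<and>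
       cmod c ^ 2 \<le> p00 * p11 \<and>
       gibbs_weight \<beta> E0 E1 * p00 + (1 - gibbs_weight \<beta> E0 E1) * p01 = gibbs_weight \<beta> E0 E1 \<and>
       r * p00 + (1 - r) * p01 = s \<and> c * a = b"
    using h(1-8) rs ca by blast
next
  assume "\<exists>p00 p01 p10 p11 c. 0 \<le> p00 \<and> 0 \<le> p01 \<and> 0 \<le> p10 \<and> 0 \<le> p11 \<and> p00 + p10 = 1 \<and> p01 + p11 = 1 \<and>
       cmod c ^ 2 \<le> p00 * p11 \<and>
       gibbs_weight \<beta> E0 E1 * p00 + (1 - gibbs_weight \<beta> E0 E1) * p01 = gibbs_weight \<beta> E0 E1 \<and>
       r * p00 + (1 - r) * p01 = s \<and> c * a = b"
  then obtain p00 p01 p10 p11 c where h: "0 \<le> p00" "0 \<le> p01" "0 \<le> p10" "0 \<le> p11" "p00 + p10 = 1" "p01 + p11 = 1"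
   "cmod c ^ 2 \<le> p00 * p11"
   "gibbs_weight \<beta> E0 E1 * p00 + (1 - gibbs_weight \<beta> E0 E1) * p01 = gibbs_weight \<beta> E0 E1"
   "r * p00 + (1 - r) * p01 = s" "c * a = b" by blast
  have "Emap p00 p01 p10 p11 c (qubit r a) = qubit s b"
    using Emap_qubit[OF h(5,6), of c r a] h(9,10) by simp
  thus "GPC_convertible \<beta> E0 E1 (qubit r a) (qubit s b)"
    unfolding GPC_convertible_def using Emap_GPC[OF h(1-8)] by blast
qed

lemma alg1:
  fixes g r s p00 p01 p10 p11 :: real
  assumes e1: "g * p00 + (1 - g) * p01 = g" and e2: "r * p00 + (1 - r) * p01 = s"
    and "p00 + p10 = 1" "p01 + p11 = 1"
  shows "p00 * (r - g) = s * (1 - g) - (1 - r) * g" "p11 * (r - g) = r * (1 - g) - (1 - s) * g"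
proof -
  have "p00 * (r - g) - (s * (1 - g) - (1 - r) * g) =
     (1 - g) * (r * p00 + (1 - r) * p01 - s) - (1 - r) * (g * p00 + (1 - g) * p01 - g)"
    by (simp add: algebra_simps)
  also have "\<dots> = 0" using e1 e2 by simp
  finally show "p00 * (r - g) = s * (1 - g) - (1 - r) * g" by simp
  have p11: "p11 = 1 - p01" using assms(4) by simp
  have "p11 * (r - g) - (r * (1 - g) - (1 - s) * g) =
     - (r * (g * p00 + (1 - g) * p01 - g) - g * (r * p00 + (1 - r) * p01 - s))"
    unfolding p11 by (simp add: algebra_simps)
  also have "\<dots> = 0" using e1 e2 by simp
  finally show "p11 * (r - g) = r * (1 - g) - (1 - s) * g" by simp
qed

theorem theorem5:
  fixes \<beta> E0 E1 r s :: real and a b :: complex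
  defines "g \<equiv> gibbs_weight \<beta> E0 E1"
  assumes "E0 \<noteq> E1"
    and "density (qubit r a)" and "density (qubit s b)"
    and "a \<noteq> 0" and "g \<noteq> 1 / 2"
  shows "(diagv r \<noteq> diagv g \<longrightarrow>
           (GPC_convertible \<beta> E0 E1 (qubit r a) (qubit s b) \<longleftrightarrow>
              rel_majorizes 2 (diagv r) (diagv g) (diagv s) (diagv g) \<and>
              cmod b ^ 2 / cmod a ^ 2 \<le>
                det (mat_of_rows_list 2 [[s, 1 - r], [g, 1 - g]]) *
                det (mat_of_rows_list 2 [[r, 1 - s], [g, 1 - g]]) / (r - g) ^ 2))
       \<and> (diagv r = diagv g \<longrightarrow>
           (GPC_convertible \<beta> E0 E1 (qubit r a) (qubit s b) \<longleftrightarrow>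
              diagv s = diagv g \<and> cmod a \<ge> cmod b))"
proof -
  note CI = conv_iff[OF assms(2), of \<beta> r a s b, folded g_def]
  have a0: "cmod a > 0" using assms(5) by simp
  have d1: "det (mat_of_rows_list 2 [[s, 1 - r], [g, 1 - g]]) = s * (1 - g) - (1 - r) * g" by (rule det2)
  have d2: "det (mat_of_rows_list 2 [[r, 1 - s], [g, 1 - g]]) = r * (1 - g) - (1 - s) * g" by (rule det2)
  have quot: "cmod b ^ 2 / cmod a ^ 2 = cmod (b / a) ^ 2" by (simp add: norm_divide power_divide)
  have ba: "b / a * a = b" using assms(5) by simp
  show ?thesis unfolding diagv_eq
  proof (intro conjI impI)
    assume rg: "r \<noteq> g"
    hence rg2: "(r - g) ^ 2 > 0" by simp
    have key: "\<And>p00 p01 p10 p11. g * p00 + (1 - g) * p01 = g \<Longrightarrow> r * p00 + (1 - r) * p01 = s \<Longrightarrow>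
       p00 + p10 = 1 \<Longrightarrow> p01 + p11 = 1 \<Longrightarrow>
       (s * (1 - g) - (1 - r) * g) * (r * (1 - g) - (1 - s) * g) / (r - g) ^ 2 = p00 * p11"
    proof -
      fix p00 p01 p10 p11 assume h: "g * p00 + (1 - g) * p01 = g" "r * p00 + (1 - r) * p01 = s"
       "p00 + p10 = 1" "p01 + p11 = 1"
      note A = alg1[OF h]
      have "(s * (1 - g) - (1 - r) * g) * (r * (1 - g) - (1 - s) * g) = (p00 * p11) * (r - g) ^ 2"
        unfolding A(1)[symmetric] A(2)[symmetric] by (simp add: power2_eq_square)
      thus "(s * (1 - g) - (1 - r) * g) * (r * (1 - g) - (1 - s) * g) / (r - g) ^ 2 = p00 * p11"
        using rg2 by simp
    qed
    show "GPC_convertible \<beta> E0 E1 (qubit r a) (qubit s b) \<longleftrightarrow>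
              rel_majorizes 2 (diagv r) (diagv g) (diagv s) (diagv g) \<and>
              cmod b ^ 2 / cmod a ^ 2 \<le>
                det (mat_of_rows_list 2 [[s, 1 - r], [g, 1 - g]]) *
                det (mat_of_rows_list 2 [[r, 1 - s], [g, 1 - g]]) / (r - g) ^ 2"
      unfolding CI relmaj_iff d1 d2
    proof
      assume "\<exists>p00 p01 p10 p11 c. 0 \<le> p00 \<and> 0 \<le> p01 \<and> 0 \<le> p10 \<and> 0 \<le> p11 \<and> p00 + p10 = 1 \<and> p01 + p11 = 1 \<and>
         cmod c ^ 2 \<le> p00 * p11 \<and> g * p00 + (1 - g) * p01 = g \<and> r * p00 + (1 - r) * p01 = s \<and> c * a = b"
      then obtain p00 p01 p10 p11 c where h: "0 \<le> p00" "0 \<le> p01" "0 \<le> p10" "0 \<le> p11" "p00 + p10 = 1" "p01 + p11 = 1"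
         "cmod c ^ 2 \<le> p00 * p11" "g * p00 + (1 - g) * p01 = g" "r * p00 + (1 - r) * p01 = s" "c * a = b" by blast
      have "b / a = c" using h(10) assms(5) by auto
      hence "cmod b ^ 2 / cmod a ^ 2 \<le> p00 * p11" unfolding quot using h(7) by simp
      thus "(\<exists>p00 p01 p10 p11. 0 \<le> p00 \<and> 0 \<le> p01 \<and> 0 \<le> p10 \<and> 0 \<le> p11 \<and> p00 + p10 = 1 \<and> p01 + p11 = 1
           \<and> r * p00 + (1 - r) * p01 = s \<and> g * p00 + (1 - g) * p01 = g) \<and>
          cmod b ^ 2 / cmod a ^ 2 \<le> (s * (1 - g) - (1 - r) * g) * (r * (1 - g) - (1 - s) * g) / (r - g) ^ 2"
        using h key[OF h(8,9,5,6)] by auto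
    next
      assume "(\<exists>p00 p01 p10 p11. 0 \<le> p00 \<and> 0 \<le> p01 \<and> 0 \<le> p10 \<and> 0 \<le> p11 \<and> p00 + p10 = 1 \<and> p01 + p11 = 1
           \<and> r * p00 + (1 - r) * p01 = s \<and> g * p00 + (1 - g) * p01 = g) \<and>
          cmod b ^ 2 / cmod a ^ 2 \<le> (s * (1 - g) - (1 - r) * g) * (r * (1 - g) - (1 - s) * g) / (r - g) ^ 2"
      then obtain p00 p01 p10 p11 where h: "0 \<le> p00" "0 \<le> p01" "0 \<le> p10" "0 \<le> p11" "p00 + p10 = 1" "p01 + p11 = 1"
         "r * p00 + (1 - r) * p01 = s" "g * p00 + (1 - g) * p01 = g"
         and q: "cmod b ^ 2 / cmod a ^ 2 \<le> (s * (1 - g) - (1 - r) * g) * (r * (1 - g) - (1 - s) * g) / (r - g) ^ 2" by blast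
      have "cmod (b / a) ^ 2 \<le> p00 * p11" using q key[OF h(8,7,5,6)] unfolding quot by simp
      thus "\<exists>p00 p01 p10 p11 c. 0 \<le> p00 \<and> 0 \<le> p01 \<and> 0 \<le> p10 \<and> 0 \<le> p11 \<and> p00 + p10 = 1 \<and> p01 + p11 = 1 \<and>
         cmod c ^ 2 \<le> p00 * p11 \<and> g * p00 + (1 - g) * p01 = g \<and> r * p00 + (1 - r) * p01 = s \<and> c * a = b"
        using h ba by blast
    qed
  next
    assume rg: "r = g"
    show "GPC_convertible \<beta> E0 E1 (qubit r a) (qubit s b) \<longleftrightarrow> s = g \<and> cmod a \<ge> cmod b"
      unfolding CI
    proof
      assume "\<exists>p00 p01 p10 p11 c. 0 \<le> p00 \<and> 0 \<le> p01 \<and> 0 \<le> p10 \<and> 0 \<le> p11 \<and> p00 + p10 = 1 \<and> p01 + p11 = 1 \<and>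
         cmod c ^ 2 \<le> p00 * p11 \<and> g * p00 + (1 - g) * p01 = g \<and> r * p00 + (1 - r) * p01 = s \<and> c * a = b"
      then obtain p00 p01 p10 p11 c where h: "0 \<le> p00" "0 \<le> p01" "0 \<le> p10" "0 \<le> p11" "p00 + p10 = 1" "p01 + p11 = 1"
         "cmod c ^ 2 \<le> p00 * p11" "g * p00 + (1 - g) * p01 = g" "r * p00 + (1 - r) * p01 = s" "c * a = b" by blast
      have sg: "s = g" using h(8,9) rg by simp
      have "p00 * p11 \<le> 1" using h by (intro mult_le_one) auto
      hence "cmod c ^ 2 \<le> 1" using h(7) by linarith
      hence c1: "cmod c \<le> 1" by (simp add: power_le_one_iff)
      have "cmod b = cmod c * cmod a" using norm_mult[of c a] h(10) by simp
      also have "\<dots> \<le> cmod a" using c1 a0 by (simp add: mult_le_cancel_right1)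
      finally show "s = g \<and> cmod a \<ge> cmod b" using sg by simp
    next
      assume h: "s = g \<and> cmod a \<ge> cmod b"
      have "cmod (b / a) \<le> 1" using h a0 by (simp add: norm_divide divide_le_eq)
      hence "cmod (b / a) ^ 2 \<le> 1 * 1" by (simp add: power_le_one)
      moreover have "g * 1 + (1 - g) * 0 = g" "r * 1 + (1 - r) * 0 = s" using h rg by simp_all
      ultimately show "\<exists>p00 p01 p10 p11 c. 0 \<le> p00 \<and> 0 \<le> p01 \<and> 0 \<le> p10 \<and> 0 \<le> p11 \<and> p00 + p10 = 1 \<and> p01 + p11 = 1 \<and>
         cmod c ^ 2 \<le> p00 * p11 \<and> g * p00 + (1 - g) * p01 = g \<and> r * p00 + (1 - r) * p01 = s \<and> c * a = b"
        using ba by (intro exI[of _ 1] exI[of _ 0] exI[of _ 0] exI[of _ 1] exI[of _ "b / a"]) simp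
    qed
  qed
qed


end
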